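(* Let $G=(V,E)$ be a finite, simple, connected graph with Bakry Emery curvature $K(x)\geq K>0$ at every vertex $x$. Then \[ \operatorname{diam}_{\operatorname{eff}}(G)\leq\frac{\max_v\operatorname{Deg}(v)}{K}. \]
   Context: $d$ is the combinatorial distance, $\operatorname{Deg}$ the degree, $\operatorname{diam}_{\operatorname{eff}}(G)=\frac{1}{|V|^2}\sum_{x,y}d(x,y)$. Laplacian $\Delta f(x)=\sum_{y\sim x}(f(y)-f(x))$. Define $\Gamma_0(f,g)=fg$ and $2\Gamma_{i+1}(f,g)=\Delta\Gamma_i(f,g)-\Gamma_i(f,\Delta g)-\Gamma_i(\Delta f,g)$; write $\Gamma=\Gamma_1$, $\Gamma_i f=\Gamma_i(f,f)$. The Bakry Emery curvature at $x$ is $K(x)=\inf\{\Gamma_2 f(x): f:V\to\mathbb{R},\ \Gamma f(x)=1\}$. *)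

theory Defs
  imports "HOL-Analysis.Analysis" "HOL-Library.Extended_Real"
begin

definition simple_graph :: "'a set \<Rightarrow> ('a \<Rightarrow> 'a \<Rightarrow> bool) \<Rightarrow> bool" where
  "simple_graph V E \<longleftrightarrow> finite V \<and> (\<forall>x y. E x y \<longrightarrow> x \<in> V \<and> y \<in> V)
     \<and> (\<forall>x y. E x y \<longrightarrow> E y x) \<and> (\<forall>x. \<not> E x x)"

definition nbrs :: "'a set \<Rightarrow> ('a \<Rightarrow> 'a \<Rightarrow> bool) \<Rightarrow> 'a \<Rightarrow> 'a set" where
  "nbrs V E x = {y \<in> V. E x y}"

definition deg :: "'a set \<Rightarrow> ('a \<Rightarrow> 'a \<Rightarrow> bool) \<Rightarrow> 'a \<Rightarrow> nat" where
  "deg V E x = card (nbrs V E x)"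

(* walk x0 x1 ... xn given as a list of vertices; its length is the number of edges *)
definition is_walk :: "('a \<Rightarrow> 'a \<Rightarrow> bool) \<Rightarrow> 'a list \<Rightarrow> 'a \<Rightarrow> 'a \<Rightarrow> bool" where
  "is_walk E p x y \<longleftrightarrow> p \<noteq> [] \<and> hd p = x \<and> last p = y
     \<and> (\<forall>i. Suc i < length p \<longrightarrow> E (p ! i) (p ! Suc i))"

definition connected_graph :: "'a set \<Rightarrow> ('a \<Rightarrow> 'a \<Rightarrow> bool) \<Rightarrow> bool" where
  "connected_graph V E \<longleftrightarrow> V \<noteq> {} \<and> (\<forall>x\<in>V. \<forall>y\<in>V. \<exists>p. is_walk E p x y)"

definition gdist :: "('a \<Rightarrow> 'a \<Rightarrow> bool) \<Rightarrow> 'a \<Rightarrow> 'a \<Rightarrow> nat" where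
  "gdist E x y = (LEAST n. \<exists>p. is_walk E p x y \<and> length p = Suc n)"

definition eff_diam :: "'a set \<Rightarrow> ('a \<Rightarrow> 'a \<Rightarrow> bool) \<Rightarrow> real" where
  "eff_diam V E = (\<Sum>x\<in>V. \<Sum>y\<in>V. real (gdist E x y)) / (real (card V))^2"

definition laplacian :: "'a set \<Rightarrow> ('a \<Rightarrow> 'a \<Rightarrow> bool) \<Rightarrow> ('a \<Rightarrow> real) \<Rightarrow> 'a \<Rightarrow> real" where
  "laplacian V E f x = (\<Sum>y\<in>nbrs V E x. f y - f x)"

fun GammaI :: "'a set \<Rightarrow> ('a \<Rightarrow> 'a \<Rightarrow> bool) \<Rightarrow> nat \<Rightarrow> ('a \<Rightarrow> real) \<Rightarrow> ('a \<Rightarrow> real) \<Rightarrow> 'a \<Rightarrow> real" where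
  "GammaI V E 0 f g = (\<lambda>x. f x * g x)"
| "GammaI V E (Suc i) f g = (\<lambda>x. (laplacian V E (GammaI V E i f g) x
      - GammaI V E i f (laplacian V E g) x - GammaI V E i (laplacian V E f) g x) / 2)"

(* Bakry-Emery curvature at x, as an extended real (infimum of the empty set is +infinity,
   an unbounded-below set gives -infinity) *)
definition BE_curv :: "'a set \<Rightarrow> ('a \<Rightarrow> 'a \<Rightarrow> bool) \<Rightarrow> 'a \<Rightarrow> ereal" where
  "BE_curv V E x = Inf {ereal (GammaI V E 2 f f x) | f. GammaI V E 1 f f x = 1}"

end

theory Submission
  imports Defs "Jordan_Normal_Form.Determinant"
begin

lemma sg_finite: "simple_graph V E \<Longrightarrow> finite V" by (simp add: simple_graph_def)
lemma sg_in: "simple_graph V E \<Longrightarrow> E x y \<Longrightarrow> x \<in> V \<and> y \<in> V" by (simp add: simple_graph_def)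
lemma sg_sym: "simple_graph V E \<Longrightarrow> E x y \<Longrightarrow> E y x" by (simp add: simple_graph_def)
lemma nbrs_sub: "nbrs V E x \<subseteq> V" by (auto simp: nbrs_def)
lemma nbrs_fin: "simple_graph V E \<Longrightarrow> finite (nbrs V E x)"
  using sg_finite nbrs_sub finite_subset by metis

lemma gamma1: "GammaI V E 1 f g x = (\<Sum>y\<in>nbrs V E x. (f y - f x) * (g y - g x)) / 2"
  by (simp add: laplacian_def sum_subtractf[symmetric] algebra_simps sum_distrib_left)

declare GammaI.simps[simp del]

lemma gamma1_fun: "GammaI V E 1 f g = (\<lambda>x. (\<Sum>y\<in>nbrs V E x. (f y - f x) * (g y - g x)) / 2)"
  by (rule ext, rule gamma1)

lemma gamma2: "GammaI V E 2 f f x = laplacian V E (GammaI V E 1 f f) x / 2 - GammaI V E 1 f (laplacian V E f) x"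
proof -
  have s: "GammaI V E 1 (laplacian V E f) f x = GammaI V E 1 f (laplacian V E f) x"
    unfolding gamma1 by (simp add: mult.commute)
  have two: "(2::nat) = Suc 1" by simp
  have "GammaI V E 2 f f x = (laplacian V E (GammaI V E 1 f f) x - GammaI V E 1 f (laplacian V E f) x
     - GammaI V E 1 (laplacian V E f) f x) / 2"
    by (simp only: two GammaI.simps(2))
  then show ?thesis using s by simp
qed

lemma lap_scale: "laplacian V E (\<lambda>x. c * f x) = (\<lambda>x. c * laplacian V E f x)"
  by (rule ext) (simp add: laplacian_def sum_distrib_left algebra_simps)

lemma gamma1_scale: "GammaI V E 1 (\<lambda>x. c * f x) (\<lambda>x. c * g x) x = c^2 * GammaI V E 1 f g x"
  unfolding gamma1 by (simp add: sum_distrib_left power2_eq_square algebra_simps)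

lemma gamma2_scale: "GammaI V E 2 (\<lambda>x. c * f x) (\<lambda>x. c * f x) x = c^2 * GammaI V E 2 f f x"
proof -
  have a: "GammaI V E 1 (\<lambda>x. c * f x) (\<lambda>x. c * f x) = (\<lambda>x. c^2 * GammaI V E 1 f f x)"
    by (rule ext, rule gamma1_scale)
  show ?thesis
    unfolding gamma2 a lap_scale gamma1_scale by (simp add: algebra_simps)
qed

lemma curv:
  assumes "ereal K \<le> BE_curv V E x" and pos: "GammaI V E 1 u u x > 0"
  shows "K * GammaI V E 1 u u x \<le> GammaI V E 2 u u x"
proof -
  define s where "s = 1 / sqrt (GammaI V E 1 u u x)"
  define v where "v = (\<lambda>y. s * u y)"
  have s2: "s^2 * GammaI V E 1 u u x = 1" using pos by (simp add: s_def power_divide)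
  have "GammaI V E 1 v v x = 1" using s2 gamma1_scale[of V E s u u x] unfolding v_def by simp
  then have "ereal (GammaI V E 2 v v x) \<in> {ereal (GammaI V E 2 f f x) | f. GammaI V E 1 f f x = 1}" by blast
  then have "BE_curv V E x \<le> ereal (GammaI V E 2 v v x)" unfolding BE_curv_def by (rule Inf_lower)
  with assms(1) have "ereal K \<le> ereal (GammaI V E 2 v v x)" by (rule order_trans)
  then have "K \<le> GammaI V E 2 v v x" by simp
  also have "\<dots> = s^2 * GammaI V E 2 u u x" by (simp add: v_def gamma2_scale)
  finally have "K * GammaI V E 1 u u x \<le> s^2 * GammaI V E 2 u u x * GammaI V E 1 u u x"
    using pos by simp
  also have "\<dots> = GammaI V E 2 u u x" using s2 by (simp add: algebra_simps)
  finally show ?thesis .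
qed

lemma walk_prop:
  assumes "is_walk E p x y" "P x" "\<And>a b. P a \<Longrightarrow> E a b \<Longrightarrow> P b"
  shows "P y"
proof -
  have w: "p \<noteq> []" "hd p = x" "last p = y" "\<And>i. Suc i < length p \<Longrightarrow> E (p ! i) (p ! Suc i)"
    using assms(1) by (auto simp: is_walk_def)
  have "\<forall>i. i < length p \<longrightarrow> P (p ! i)"
  proof
    fix i show "i < length p \<longrightarrow> P (p ! i)"
    proof (induction i)
      case 0 then show ?case using w assms(2) by (simp add: hd_conv_nth)
    next
      case (Suc i) then show ?case using w assms(3) by auto
    qed
  qed
  then have "P (p ! (length p - 1))" using w(1) by simp
  then show ?thesis using w by (simp add: last_conv_nth)
qed

lemma gdist_walk:
  assumes "connected_graph V E" "x \<in> V" "y \<in> V"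
  shows "\<exists>p. is_walk E p x y \<and> length p = Suc (gdist E x y)"
proof -
  obtain p where p: "is_walk E p x y" using assms by (auto simp: connected_graph_def)
  then have "\<exists>n p. is_walk E p x y \<and> length p = Suc n"
    by (metis is_walk_def length_greater_0_conv Suc_pred)
  then show ?thesis unfolding gdist_def by (rule LeastI_ex)
qed

lemma gdist_self: "gdist E x x = 0"
proof -
  have "is_walk E [x] x x" by (simp add: is_walk_def)
  then have "gdist E x x \<le> 0" unfolding gdist_def by (intro Least_le) auto
  then show ?thesis by simp
qed

lemma gdist_step:
  assumes "connected_graph V E" "x \<in> V" "y \<in> V" "E y z"
  shows "gdist E x z \<le> gdist E x y + 1"
proof -
  obtain p where p: "is_walk E p x y" "length p = Suc (gdist E x y)"
    using gdist_walk[OF assms(1-3)] by blast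
  have "is_walk E (p @ [z]) x z"
    unfolding is_walk_def
  proof (intro conjI allI impI)
    show "p @ [z] \<noteq> []" by simp
    show "hd (p @ [z]) = x" using p by (simp add: is_walk_def)
    show "last (p @ [z]) = z" by simp
    fix i assume i: "Suc i < length (p @ [z])"
    show "E ((p @ [z]) ! i) ((p @ [z]) ! Suc i)"
    proof (cases "Suc i < length p")
      case True then show ?thesis using p(1) by (simp add: is_walk_def nth_append)
    next
      case False
      then have "Suc i = length p" using i by simp
      moreover have "p ! i = y" using p(1) \<open>Suc i = length p\<close> 
        by (metis diff_Suc_1 is_walk_def last_conv_nth)
      ultimately show ?thesis using assms(4) by (simp add: nth_append)
    qed
  qed
  then have "\<exists>q. is_walk E q x z \<and> length q = Suc (length p)"
    by (intro exI[of _ "p @ [z]"]) simp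
  then have "gdist E x z \<le> length p" unfolding gdist_def by (rule Least_le)
  then show ?thesis using p(2) by simp
qed

lemma gdist_lip:
  assumes "simple_graph V E" "connected_graph V E" "x \<in> V" "E y z"
  shows "\<bar>real (gdist E x y) - real (gdist E x z)\<bar> \<le> 1"
proof -
  have yz: "y \<in> V" "z \<in> V" using sg_in[OF assms(1,4)] by auto
  have "gdist E x z \<le> gdist E x y + 1" using gdist_step[OF assms(2,3) yz(1) assms(4)] .
  moreover have "gdist E x y \<le> gdist E x z + 1" using gdist_step[OF assms(2,3) yz(2) sg_sym[OF assms(1,4)]] .
  ultimately show ?thesis by linarith
qed

lemma lap_filter:
  assumes "simple_graph V E"
  shows "laplacian V E u x = (\<Sum>y\<in>V. if E x y then u y - u x else 0)"
  unfolding laplacian_def nbrs_def by (rule sum.inter_filter[OF sg_finite[OF assms]])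

lemma sum_lap:
  assumes "simple_graph V E"
  shows "(\<Sum>x\<in>V. laplacian V E u x) = 0"
proof -
  have fin: "finite V" using sg_finite[OF assms] .
  have "(\<Sum>x\<in>V. laplacian V E u x) = (\<Sum>x\<in>V. (\<Sum>y\<in>V. if E x y then u y else 0) - (\<Sum>y\<in>V. if E x y then u x else 0))"
    unfolding lap_filter[OF assms] by (auto simp: sum_subtractf[symmetric] intro!: sum.cong)
  also have "\<dots> = (\<Sum>x\<in>V. \<Sum>y\<in>V. if E x y then u y else 0) - (\<Sum>x\<in>V. \<Sum>y\<in>V. if E x y then u x else 0)"
    by (simp add: sum_subtractf)
  also have "(\<Sum>x\<in>V. \<Sum>y\<in>V. if E x y then u y else 0) = (\<Sum>y\<in>V. \<Sum>x\<in>V. if E x y then u y else 0)"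
    by (rule sum.swap)
  also have "\<dots> = (\<Sum>y\<in>V. \<Sum>x\<in>V. if E y x then u y else 0)"
    using sg_sym[OF assms] by (intro sum.cong refl) metis
  finally show ?thesis by simp
qed

lemma lap_form:
  assumes "simple_graph V E"
  shows "laplacian V E u x = (\<Sum>y\<in>nbrs V E x. u y) - real (deg V E x) * u x"
  by (simp add: laplacian_def sum_subtractf deg_def)

lemma harm_const:
  assumes sg: "simple_graph V E" and cg: "connected_graph V E"
    and h: "\<forall>x\<in>V. laplacian V E u x = 0" and x: "x \<in> V" and y: "y \<in> V"
  shows "u x = u y"
proof -
  have fin: "finite V" using sg_finite[OF sg] .
  have ne: "V \<noteq> {}" using x by auto
  have "\<exists>z. z \<in> V \<and> (\<forall>w\<in>V. u w \<le> u z)"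
  proof -
    have "Max (u ` V) \<in> u ` V" using fin ne by (intro Max_in) auto
    then obtain z where "z \<in> V" "u z = Max (u ` V)" by auto
    then show ?thesis using fin by (intro exI[of _ z]) auto
  qed
  then obtain xm where xm: "xm \<in> V" "\<forall>w\<in>V. u w \<le> u xm" by blast
  have step: "b \<in> V \<and> u b = u xm" if "a \<in> V \<and> u a = u xm" "E a b" for a b
  proof -
    have bV: "b \<in> V" using sg_in[OF sg that(2)] by simp
    have nf: "finite (nbrs V E a)" using nbrs_fin[OF sg] .
    have "(\<Sum>z\<in>nbrs V E a. u a - u z) = - laplacian V E u a"
      by (simp add: laplacian_def sum_negf[symmetric])
    also have "\<dots> = 0" using h that(1) by simp
    finally have "\<forall>z\<in>nbrs V E a. u a - u z = 0"
      using sum_nonneg_eq_0_iff[OF nf, of "\<lambda>z. u a - u z"] xm that(1) nbrs_sub by fastforce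
    moreover have "b \<in> nbrs V E a" using bV that(2) by (simp add: nbrs_def)
    ultimately show ?thesis using bV that(1) by auto
  qed
  have "\<forall>z\<in>V. u z = u xm"
  proof
    fix z assume z: "z \<in> V"
    obtain p where "is_walk E p xm z" using cg xm(1) z by (auto simp: connected_graph_def)
    then have "z \<in> V \<and> u z = u xm"
      by (rule walk_prop[where P = "\<lambda>a. a \<in> V \<and> u a = u xm"]) (simp add: xm(1), metis step)
    then show "u z = u xm" by simp
  qed
  then show ?thesis using x y by simp
qed

lemma solve_mat:
  fixes A :: "real mat"
  assumes A: "A \<in> carrier_mat n n"
    and inj: "\<forall>v\<in>carrier_vec n. A *\<^sub>v v = 0\<^sub>v n \<longrightarrow> v = 0\<^sub>v n"
    and b: "b \<in> carrier_vec n"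
  shows "\<exists>w\<in>carrier_vec n. A *\<^sub>v w = b"
proof -
  have "det A \<noteq> 0" using det_0_iff_vec_prod_zero[OF A] inj by auto
  from det_non_zero_imp_unit[OF A this, unfolded Units_def, of "()"]
  obtain B where B: "B \<in> carrier_mat n n" and AB: "A * B = 1\<^sub>m n"
    by (auto simp: ring_mat_def)
  have "A *\<^sub>v (B *\<^sub>v b) = (A * B) *\<^sub>v b" using A B b by simp
  also have "\<dots> = b" using AB b by simp
  finally show ?thesis using B b by (intro bexI[of _ "B *\<^sub>v b"]) auto
qed

lemma poisson:
  assumes sg: "simple_graph V E" and cg: "connected_graph V E"
  shows "\<exists>u. \<forall>x\<in>V. laplacian V E u x = f x - (\<Sum>y\<in>V. f y) / real (card V)"
proof -
  define n where "n = card V"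
  have fin: "finite V" using sg_finite[OF sg] .
  have npos: "n > 0" using cg fin by (auto simp: connected_graph_def n_def card_gt_0_iff)
  obtain e where e: "bij_betw e {0..<n} V" using ex_bij_betw_nat_finite[OF fin] n_def by blast
  have inj: "inj_on e {0..<n}" and img: "e ` {0..<n} = V" using e by (auto simp: bij_betw_def)
  define ie where "ie = inv_into {0..<n} e"
  have ie1: "\<And>i. i < n \<Longrightarrow> ie (e i) = i" using inj by (simp add: ie_def inv_into_f_f)
  have ie2: "\<And>y. y \<in> V \<Longrightarrow> e (ie y) = y \<and> ie y < n"
    using img by (metis atLeastLessThan_iff ie_def f_inv_into_f inv_into_into)
  define A :: "real mat" where "A = mat n n (\<lambda>(i,j). (if E (e i) (e j) then 1 else 0)
       - (if i = j then real (deg V E (e i)) else 0) - 1)"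
  have Ac: "A \<in> carrier_mat n n" by (simp add: A_def)
  have key: "(A *\<^sub>v w) $ i = laplacian V E (\<lambda>y. w $ ie y) (e i) - (\<Sum>y\<in>V. w $ ie y)"
    if w: "w \<in> carrier_vec n" and i: "i < n" for w i
  proof -
    define u where "u = (\<lambda>y. w $ ie y)"
    define x where "x = e i"
    have xV: "x \<in> V" using i img x_def by auto
    have "(A *\<^sub>v w) $ i = (\<Sum>j\<in>{0..<n}. A $$ (i,j) * w $ j)"
      using Ac w i by (simp add: scalar_prod_def)
    also have "\<dots> = (\<Sum>j\<in>{0..<n}. ((if E x (e j) then 1 else 0)
        - (if x = e j then real (deg V E x) else 0) - 1) * u (e j))"
    proof (rule sum.cong[OF refl])
      fix j assume j: "j \<in> {0..<n}"
      have "(i = j) = (x = e j)" using inj i j unfolding x_def inj_on_def by auto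
      then show "A $$ (i,j) * w $ j = ((if E x (e j) then 1 else 0)
        - (if x = e j then real (deg V E x) else 0) - 1) * u (e j)"
        using i j ie1 by (simp add: A_def x_def u_def)
    qed
    also have "\<dots> = (\<Sum>y\<in>V. ((if E x y then 1 else 0)
        - (if x = y then real (deg V E x) else 0) - 1) * u y)"
      by (rule sum.reindex_bij_betw[OF e])
    also have "\<dots> = (\<Sum>y\<in>V. if E x y then u y else 0) - (\<Sum>y\<in>V. if x = y then real (deg V E x) * u y else 0)
        - (\<Sum>y\<in>V. u y)"
      unfolding sum_subtractf[symmetric] by (rule sum.cong) (auto simp: algebra_simps)
    also have "(\<Sum>y\<in>V. if E x y then u y else 0) = (\<Sum>y\<in>nbrs V E x. u y)"
      unfolding nbrs_def by (rule sum.inter_filter[OF fin, symmetric])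
    also have "(\<Sum>y\<in>V. if x = y then real (deg V E x) * u y else 0) = real (deg V E x) * u x"
      using xV fin by (simp add: sum.delta)
    finally show ?thesis using lap_form[OF sg] unfolding x_def u_def by simp
  qed
  have suminv: "(\<Sum>x\<in>V. laplacian V E u x - c) = - real n * c" for u c
    using sum_lap[OF sg, of u] by (simp add: sum_subtractf n_def)
  have injA: "\<forall>v\<in>carrier_vec n. A *\<^sub>v v = 0\<^sub>v n \<longrightarrow> v = 0\<^sub>v n"
  proof (intro ballI impI)
    fix v assume v: "v \<in> carrier_vec n" "A *\<^sub>v v = 0\<^sub>v n"
    define u where "u = (\<lambda>y. v $ ie y)"
    have h0: "\<forall>x\<in>V. laplacian V E u x - (\<Sum>y\<in>V. u y) = 0"
    proof
      fix x assume x: "x \<in> V"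
      have "(A *\<^sub>v v) $ ie x = 0" using v ie2[OF x] by simp
      then show "laplacian V E u x - (\<Sum>y\<in>V. u y) = 0"
        using key[OF v(1) ie2[OF x, THEN conjunct2]] ie2[OF x] unfolding u_def by simp
    qed
    then have "- real n * (\<Sum>y\<in>V. u y) = 0" using suminv[of u "\<Sum>y\<in>V. u y"] by simp
    then have s0: "(\<Sum>y\<in>V. u y) = 0" using npos by simp
    then have hz: "\<forall>x\<in>V. laplacian V E u x = 0" using h0 by simp
    obtain x0 where x0: "x0 \<in> V" using cg by (auto simp: connected_graph_def)
    have c: "\<forall>y\<in>V. u y = u x0" using harm_const[OF sg cg hz _ x0] by blast
    then have "(\<Sum>y\<in>V. u y) = real n * u x0" by (simp add: n_def)
    with s0 npos have u0: "u x0 = 0" by simp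
    show "v = 0\<^sub>v n"
    proof (rule eq_vecI)
      fix i assume i: "i < dim_vec (0\<^sub>v n)"
      then have i': "i < n" by simp
      then have "e i \<in> V" using img by auto
      then have "u (e i) = 0" using c u0 by simp
      then show "v $ i = 0\<^sub>v n $ i" using ie1[OF i'] i' by (simp add: u_def)
    next
      show "dim_vec v = dim_vec (0\<^sub>v n)" using v by simp
    qed
  qed
  define b where "b = vec n (\<lambda>i. f (e i))"
  obtain w where w: "w \<in> carrier_vec n" "A *\<^sub>v w = b"
    using solve_mat[OF Ac injA, of b] by (auto simp: b_def)
  define u where "u = (\<lambda>y. w $ ie y)"
  have hf: "\<forall>x\<in>V. laplacian V E u x - (\<Sum>y\<in>V. u y) = f x"
  proof
    fix x assume x: "x \<in> V"
    have "(A *\<^sub>v w) $ ie x = f x" using w ie2[OF x] by (simp add: b_def)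
    then show "laplacian V E u x - (\<Sum>y\<in>V. u y) = f x"
      using key[OF w(1) ie2[OF x, THEN conjunct2]] ie2[OF x] unfolding u_def by simp
  qed
  then have "(\<Sum>x\<in>V. laplacian V E u x - (\<Sum>y\<in>V. u y)) = (\<Sum>x\<in>V. f x)"
    by (intro sum.cong) auto
  then have "- real n * (\<Sum>y\<in>V. u y) = (\<Sum>x\<in>V. f x)" using suminv by simp
  then have S: "(\<Sum>y\<in>V. u y) = - (\<Sum>x\<in>V. f x) / real n" using npos by (simp add: field_simps)
  show ?thesis
  proof (intro exI[of _ u] ballI)
    fix x assume "x \<in> V"
    then have "laplacian V E u x = f x + (\<Sum>y\<in>V. u y)" using hf by force
    then show "laplacian V E u x = f x - (\<Sum>y\<in>V. f y) / real (card V)" using S by (simp add: n_def)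
  qed
qed

lemma vertex_bound:
  assumes sg: "simple_graph V E" and cg: "connected_graph V E" and Kp: "K > 0"
    and cv: "\<forall>x\<in>V. ereal K \<le> BE_curv V E x" and a: "a \<in> V"
  shows "(\<Sum>y\<in>V. real (gdist E a y)) \<le> real (card V) * real (Max (deg V E ` V)) / K"
proof -
  have fin: "finite V" using sg_finite[OF sg] .
  have ne: "V \<noteq> {}" using a by auto
  define D where "D = real (Max (deg V E ` V))"
  have Dge: "real (deg V E x) \<le> D" if "x \<in> V" for x
    using that fin by (simp add: D_def)
  have D0: "D \<ge> 0" by (simp add: D_def)
  define f where "f = (\<lambda>y. real (gdist E a y))"
  define m where "m = (\<Sum>y\<in>V. f y) / real (card V)"
  obtain u where u: "\<forall>x\<in>V. laplacian V E u x = f x - m"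
    using poisson[OF sg cg, of f] unfolding m_def by blast
  define G where "G = GammaI V E 1 u u"
  have Gf: "G x = (\<Sum>y\<in>nbrs V E x. (u y - u x)^2) / 2" for x
    unfolding G_def gamma1 by (simp add: power2_eq_square)
  have G0: "G x \<ge> 0" for x unfolding Gf by (simp add: sum_nonneg)
  have "\<exists>z. z \<in> V \<and> (\<forall>w\<in>V. G w \<le> G z)"
  proof -
    have "Max (G ` V) \<in> G ` V" using fin ne by (intro Max_in) auto
    then obtain z where "z \<in> V" "G z = Max (G ` V)" by auto
    then show ?thesis using fin by (intro exI[of _ z]) auto
  qed
  then obtain x0 where x0: "x0 \<in> V" "\<forall>w\<in>V. G w \<le> G x0" by blast
  have nb: "\<And>y. y \<in> nbrs V E x0 \<Longrightarrow> y \<in> V \<and> E x0 y" by (simp add: nbrs_def)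
  have lip: "\<bar>f y - f x0\<bar> \<le> 1" if "E x0 y" for y
    using gdist_lip[OF sg cg a that] unfolding f_def by (simp add: abs_minus_commute)
  have bound: "K^2 * G x0 \<le> D / 2"
  proof (cases "G x0 = 0")
    case True then show ?thesis using D0 by simp
  next
    case False
    then have Gp: "G x0 > 0" using G0[of x0] by simp
    have c: "K * G x0 \<le> GammaI V E 2 u u x0"
      using curv[OF cv[rule_format, OF x0(1)]] Gp unfolding G_def by simp
    have g2: "GammaI V E 2 u u x0 = laplacian V E G x0 / 2 - GammaI V E 1 u (laplacian V E u) x0"
      unfolding G_def by (rule gamma2)
    have lapG: "laplacian V E G x0 \<le> 0"
      unfolding laplacian_def by (rule sum_nonpos) (use nb x0 in auto)
    define P where "P = (\<Sum>y\<in>nbrs V E x0. (u y - u x0) * (f y - f x0))"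
    have g1: "GammaI V E 1 u (laplacian V E u) x0 = P / 2"
      unfolding gamma1 P_def
      by (rule arg_cong[where f = "\<lambda>t. t / 2"], rule sum.cong) (use nb u x0 in auto)
    have KP: "K * G x0 \<le> - P / 2" using c g2 lapG g1 by simp
    have CS: "P^2 \<le> (\<Sum>y\<in>nbrs V E x0. (u y - u x0)^2) * (\<Sum>y\<in>nbrs V E x0. (f y - f x0)^2)"
      unfolding P_def by (rule Cauchy_Schwarz_ineq_sum)
    have s1: "(\<Sum>y\<in>nbrs V E x0. (u y - u x0)^2) = 2 * G x0" using Gf[of x0] by simp
    have "(\<Sum>y\<in>nbrs V E x0. (f y - f x0)^2) \<le> (\<Sum>y\<in>nbrs V E x0. 1)"
      by (rule sum_mono) (use nb lip in \<open>simp add: abs_square_le_1\<close>)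
    also have "\<dots> = real (deg V E x0)" by (simp add: deg_def)
    also have "\<dots> \<le> D" using Dge x0(1) .
    finally have s2: "(\<Sum>y\<in>nbrs V E x0. (f y - f x0)^2) \<le> D" .
    have "2 * G x0 * (\<Sum>y\<in>nbrs V E x0. (f y - f x0)^2) \<le> 2 * G x0 * D"
      by (rule mult_left_mono[OF s2]) (use G0[of x0] in simp)
    then have "P^2 \<le> 2 * G x0 * D" using CS s1 by simp
    moreover have "(K * G x0)^2 \<le> (- P / 2)^2"
      using KP Kp Gp by (intro power_mono) auto
    ultimately have "K^2 * G x0 * G x0 \<le> D / 2 * G x0"
      by (simp add: power2_eq_square power_mult_distrib field_simps)
    then show ?thesis using Gp by simp
  qed
  have la: "laplacian V E u a = - m" using u a by (simp add: f_def gdist_self)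
  have "(laplacian V E u a)^2 = (\<Sum>y\<in>nbrs V E a. 1 * (u y - u a))^2"
    by (simp add: laplacian_def)
  also have "\<dots> \<le> (\<Sum>y\<in>nbrs V E a. 1^2) * (\<Sum>y\<in>nbrs V E a. (u y - u a)^2)"
    by (rule Cauchy_Schwarz_ineq_sum)
  also have "\<dots> = real (deg V E a) * (2 * G a)" using Gf[of a] by (simp add: deg_def)
  also have "\<dots> \<le> D * (2 * G x0)"
    using Dge[OF a] x0(2) a G0[of a] D0 by (intro mult_mono) auto
  finally have m2: "m^2 \<le> D * (2 * G x0)" using la by simp
  have "(K * m)^2 = K^2 * m^2" by (simp add: power_mult_distrib)
  also have "\<dots> \<le> K^2 * (D * (2 * G x0))" using m2 by (intro mult_left_mono) auto
  also have "\<dots> = D * (2 * (K^2 * G x0))" by simp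
  also have "\<dots> \<le> D * (2 * (D / 2))" using bound D0 by (intro mult_left_mono) auto
  also have "\<dots> = D^2" by (simp add: power2_eq_square)
  finally have "K * m \<le> D" using D0 by (rule power2_le_imp_le)
  then have "m \<le> D / K" using Kp by (simp add: field_simps)
  then have "real (card V) * m \<le> real (card V) * (D / K)" by (intro mult_left_mono) auto
  moreover have "real (card V) * m = (\<Sum>y\<in>V. f y)" using fin ne by (simp add: m_def)
  ultimately show ?thesis by (simp add: f_def D_def)
qed

theorem theoremA1:
  fixes V :: "'a set" and E :: "'a \<Rightarrow> 'a \<Rightarrow> bool" and K :: real
  assumes "simple_graph V E"
    and "connected_graph V E"
    and "K > 0"
    and "\<forall>x\<in>V. ereal K \<le> BE_curv V E x"
  shows "eff_diam V E \<le> real (Max (deg V E ` V)) / K"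
proof -
  define n where "n = real (card V)"
  define D where "D = real (Max (deg V E ` V))"
  have fin: "finite V" using sg_finite[OF assms(1)] .
  have npos: "n > 0" using assms(2) fin by (auto simp: connected_graph_def n_def card_gt_0_iff)
  have "(\<Sum>x\<in>V. \<Sum>y\<in>V. real (gdist E x y)) \<le> real (card V) * (n * D / K)"
    by (rule sum_bounded_above) (use vertex_bound[OF assms] in \<open>simp add: n_def D_def\<close>)
  then have "(\<Sum>x\<in>V. \<Sum>y\<in>V. real (gdist E x y)) / n^2 \<le> n * (n * D / K) / n^2"
    by (intro divide_right_mono) (auto simp: n_def)
  also have "\<dots> = D / K" using npos by (simp add: power2_eq_square)
  finally show ?thesis by (simp add: eff_diam_def n_def D_def)
qed

end
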